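(* A set $S\subseteq S_n$ is symmetric if and only if the set system $A(S)$ is harmonic.
   Context: $\mathrm{Des}(w)=\{i: w(i)>w(i+1)\}$; $F_{n,D}=\sum x_{i_1}\cdots x_{i_n}$ over $i_1\le\cdots\le i_n$ with $i_j<i_{j+1}$ whenever $j\in D$; $S\subseteq S_n$ is symmetric if $Q(S)=\sum_{w\in S}F_{n,\mathrm{Des}(w)}$ is a symmetric function. A set system is $H=(U,(A_1,\dots,A_m))$ with $A_i\subseteq U$ (ordered). For $I\subseteq[m]$, $H_I=\bigcap_{i\in I}A_i$ (equal to $U$ if $I=\emptyset$). The run decomposition of a finite set $I$ of positive integers is the partition given by the sizes, in nonincreasing order, of the maximal runs of consecutive integers in $I$. $H$ is harmonic if $|H_I|=|H_J|$ for all $I,J\subseteq[m]$ with the same run decomposition. For $S\subseteq S_n$, $A(S)=(S,(A_1,\dots,A_{n-1}))$ with $A_i=\{\pi\in S:\pi(i)>\pi(i+1)\}$. *)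

theory Defs
  imports Main "HOL-Library.FuncSet" "HOL-Library.Multiset" "HOL-Combinatorics.Permutations"
begin

definition Des :: "nat \<Rightarrow> (nat \<Rightarrow> nat) \<Rightarrow> nat set" where
  "Des n w = {i \<in> {1..<n}. w i > w (Suc i)}"

text \<open>Formal power series in the countably many variables x_0, x_1, ... are
  represented by their coefficient functions on exponent vectors
  alpha :: nat => nat (the coefficient of the monomial prod_k x_k^(alpha k)).
  Coefficient of x^alpha in the fundamental quasisymmetric function F_{n,D}:
  the number of index sequences i_1 <= ... <= i_n, strict at positions in D,
  whose monomial x_{i_1}...x_{i_n} equals x^alpha.\<close>
definition F_coeff :: "nat \<Rightarrow> nat set \<Rightarrow> (nat \<Rightarrow> nat) \<Rightarrow> nat" where
  "F_coeff n D \<alpha> = card {i \<in> {1..n} \<rightarrow>\<^sub>E (UNIV :: nat set).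
      (\<forall>j\<in>{1..<n}. i j \<le> i (Suc j)) \<and>
      (\<forall>j\<in>D. i j < i (Suc j)) \<and>
      (\<forall>k. \<alpha> k = card {j \<in> {1..n}. i j = k})}"

definition Q_coeff :: "nat \<Rightarrow> (nat \<Rightarrow> nat) set \<Rightarrow> (nat \<Rightarrow> nat) \<Rightarrow> nat" where
  "Q_coeff n S \<alpha> = (\<Sum>w\<in>S. F_coeff n (Des n w) \<alpha>)"

text \<open>A formal power series is a symmetric function iff it is invariant under
  every permutation of the variables (coefficientwise).\<close>
definition symmetric_set :: "nat \<Rightarrow> (nat \<Rightarrow> nat) set \<Rightarrow> bool" where
  "symmetric_set n S \<longleftrightarrow>
     (\<forall>\<sigma> :: nat \<Rightarrow> nat. \<forall>\<alpha>. bij \<sigma> \<longrightarrow> Q_coeff n S (\<alpha> \<circ> \<sigma>) = Q_coeff n S \<alpha>)"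

definition max_runs :: "nat set \<Rightarrow> (nat \<times> nat) set" where
  "max_runs I = {(a, b). a \<le> b \<and> {a..b} \<subseteq> I \<and> a - 1 \<notin> I \<and> b + 1 \<notin> I}"

definition run_decomp :: "nat set \<Rightarrow> nat list" where
  "run_decomp I = rev (sorted_list_of_multiset (image_mset (\<lambda>(a, b). b - a + 1) (mset_set (max_runs I))))"

definition H_int :: "'a set \<Rightarrow> (nat \<Rightarrow> 'a set) \<Rightarrow> nat set \<Rightarrow> 'a set" where
  "H_int U A I = (if I = {} then U else (\<Inter>i\<in>I. A i))"

definition harmonic :: "'a set \<Rightarrow> (nat \<Rightarrow> 'a set) \<Rightarrow> nat \<Rightarrow> bool" where
  "harmonic U A m \<longleftrightarrow>
     (\<forall>I J. I \<subseteq> {1..m} \<longrightarrow> J \<subseteq> {1..m} \<longrightarrow> run_decomp I = run_decomp J \<longrightarrow>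
        card (H_int U A I) = card (H_int U A J))"

definition A_sets :: "nat \<Rightarrow> (nat \<Rightarrow> nat) set \<Rightarrow> nat \<Rightarrow> (nat \<Rightarrow> nat) set" where
  "A_sets n S i = {\<pi> \<in> S. \<pi> i > \<pi> (Suc i)}"

end

theory Submission
  imports Defs
begin

definition monoN :: "nat \<Rightarrow> (nat \<Rightarrow> nat) \<Rightarrow> bool" where
  "monoN n i \<longleftrightarrow> (\<forall>j\<in>{1..<n}. i j \<le> i (Suc j))"

definition Jset :: "nat \<Rightarrow> (nat \<Rightarrow> nat) \<Rightarrow> nat set" where
  "Jset n i = {j\<in>{1..<n}. i j = i (Suc j)}"

definition cnt :: "nat \<Rightarrow> (nat \<Rightarrow> nat) \<Rightarrow> nat \<Rightarrow> nat" where
  "cnt n i k = card {j\<in>{1..n}. i j = k}"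

lemma monoN_le:
  assumes "monoN n i" "1 \<le> j" "j \<le> j'" "j' \<le> n"
  shows "i j \<le> i j'"
  using assms(3,4)
proof (induction j')
  case 0 then show ?case using assms(2) by simp
next
  case (Suc j')
  show ?case
  proof (cases "j = Suc j'")
    case True then show ?thesis by simp
  next
    case False
    then have "j \<le> j'" using Suc by simp
    then have "i j \<le> i j'" using Suc by simp
    also have "i j' \<le> i (Suc j')" using assms(1,2) \<open>j \<le> j'\<close> Suc.prems unfolding monoN_def by auto
    finally show ?thesis .
  qed
qed

lemma monoN_le_iff:
  assumes "monoN n i" "j \<in> {1..n}"
  shows "i j \<le> k \<longleftrightarrow> j \<le> card {j'\<in>{1..n}. i j' \<le> k}"
proof
  assume h: "i j \<le> k"
  have "{1..j} \<subseteq> {j'\<in>{1..n}. i j' \<le> k}"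
  proof
    fix x assume "x \<in> {1..j}"
    then have "i x \<le> i j" using monoN_le[OF assms(1), of x j] assms(2) by auto
    then show "x \<in> {j'\<in>{1..n}. i j' \<le> k}" using h \<open>x \<in> {1..j}\<close> assms(2) by auto
  qed
  from card_mono[OF _ this] show "j \<le> card {j'\<in>{1..n}. i j' \<le> k}" by simp
next
  assume h: "j \<le> card {j'\<in>{1..n}. i j' \<le> k}"
  show "i j \<le> k"
  proof (rule ccontr)
    assume "\<not> i j \<le> k"
    have "{j'\<in>{1..n}. i j' \<le> k} \<subseteq> {1..<j}"
    proof
      fix x assume x: "x \<in> {j'\<in>{1..n}. i j' \<le> k}"
      show "x \<in> {1..<j}"
      proof (rule ccontr)
        assume "x \<notin> {1..<j}"
        then have "j \<le> x" using x by auto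
        then have "i j \<le> i x" using monoN_le[OF assms(1), of j x] assms(2) x by auto
        then show False using x \<open>\<not> i j \<le> k\<close> by auto
      qed
    qed
    from card_mono[OF _ this] have "card {j'\<in>{1..n}. i j' \<le> k} \<le> j - 1" by simp
    moreover have "1 \<le> j" using assms(2) by simp
    ultimately show False using h by linarith
  qed
qed

lemma card_le_sum:
  fixes i :: "nat \<Rightarrow> nat" and k :: nat
  shows "card {j\<in>{1..n}. i j \<le> k} = (\<Sum>k'\<le>k. card {j\<in>{1..n}. i j = k'})"
proof (induction k)
  case 0 then show ?case by simp
next
  case (Suc k)
  have "{j\<in>{1..n}. i j \<le> Suc k} = {j\<in>{1..n}. i j \<le> k} \<union> {j\<in>{1..n}. i j = Suc k}" by auto
  moreover have "card ({j\<in>{1..n}. i j \<le> k} \<union> {j\<in>{1..n}. i j = Suc k}) =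
     card {j\<in>{1..n}. i j \<le> k} + card {j\<in>{1..n}. i j = Suc k}"
    by (rule card_Un_disjoint) auto
  ultimately show ?case using Suc by simp
qed

lemma monoN_unique:
  assumes "monoN n i" "monoN n i'" "\<And>k. cnt n i k = cnt n i' k" "j \<in> {1..n}"
  shows "i j = i' j"
proof -
  have c: "card {j\<in>{1..n}. i j \<le> k} = card {j\<in>{1..n}. i' j \<le> k}" for k
    using assms(3) unfolding card_le_sum cnt_def by simp
  have "i j \<le> k \<longleftrightarrow> i' j \<le> k" for k
    using monoN_le_iff[OF assms(1,4)] monoN_le_iff[OF assms(2,4)] c by simp
  from this[of "i j"] this[of "i' j"] show ?thesis by simp
qed

lemma F_coeff_mono:
  assumes "monoN n i" "D \<subseteq> {1..<n}"
  shows "F_coeff n D (cnt n i) = (if D \<inter> Jset n i = {} then 1 else 0)"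
proof -
  let ?T = "{i' \<in> {1..n} \<rightarrow>\<^sub>E (UNIV :: nat set).
      (\<forall>j\<in>{1..<n}. i' j \<le> i' (Suc j)) \<and>
      (\<forall>j\<in>D. i' j < i' (Suc j)) \<and>
      (\<forall>k. cnt n i k = card {j \<in> {1..n}. i' j = k})}"
  have sub: "?T \<subseteq> {restrict i {1..n}}"
  proof
    fix i' assume h: "i' \<in> ?T"
    have "monoN n i'" using h unfolding monoN_def by auto
    have "i' j = i j" if "j \<in> {1..n}" for j
      using monoN_unique[OF \<open>monoN n i'\<close> assms(1), of j] h that unfolding cnt_def by auto
    then have "i' = restrict i {1..n}" using h by (auto simp: PiE_def extensional_def)
    then show "i' \<in> {restrict i {1..n}}" by simp
  qed
  have FT: "F_coeff n D (cnt n i) = card ?T" unfolding F_coeff_def ..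
  show ?thesis
  proof (cases "D \<inter> Jset n i = {}")
    case True
    have "restrict i {1..n} \<in> ?T"
    proof -
      have "\<forall>j\<in>D. i j < i (Suc j)"
      proof
        fix j assume "j \<in> D"
        then have "j \<in> {1..<n}" "j \<notin> Jset n i" using True assms(2) by auto
        then show "i j < i (Suc j)" using assms(1) unfolding monoN_def Jset_def
          by (metis (mono_tags, lifting) le_neq_implies_less mem_Collect_eq)
      qed
      moreover have "cnt n i k = card {j \<in> {1..n}. restrict i {1..n} j = k}" for k
        unfolding cnt_def by (rule arg_cong[where f=card]) auto
      ultimately show ?thesis using assms unfolding monoN_def by auto
    qed
    then have "?T = {restrict i {1..n}}" using sub by blast
    then show ?thesis using True FT by simp
  next
    case False
    then obtain d where d: "d \<in> D" "d \<in> Jset n i" by auto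
    have "?T = {}"
    proof (rule ccontr)
      assume "?T \<noteq> {}"
      then have "restrict i {1..n} \<in> ?T" using sub by blast
      then have "restrict i {1..n} d < restrict i {1..n} (Suc d)" using d by blast
      then show False using d unfolding Jset_def by auto
    qed
    then show ?thesis using False FT by (metis card.empty)
  qed
qed

definition RM :: "nat set \<Rightarrow> nat multiset" where
  "RM X = image_mset (\<lambda>(a, b). b - a + 1) (mset_set (max_runs X))"

lemma fiber_interval:
  assumes "monoN n i" "{j\<in>{1..n}. i j = k} \<noteq> {}"
  shows "{j\<in>{1..n}. i j = k} = {Min {j\<in>{1..n}. i j = k}..Max {j\<in>{1..n}. i j = k}}"
    (is "?F = {Min ?F..Max ?F}")
proof
  have fin: "finite ?F" by simp
  show "?F \<subseteq> {Min ?F..Max ?F}" using fin by auto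
  show "{Min ?F..Max ?F} \<subseteq> ?F"
  proof
    fix x assume x: "x \<in> {Min ?F..Max ?F}"
    have l: "Min ?F \<in> ?F" and r: "Max ?F \<in> ?F" using fin assms(2) by (rule Min_in, rule Max_in)+
    then have "x \<in> {1..n}" using x by auto
    moreover have "i (Min ?F) \<le> i x" using monoN_le[OF assms(1), of "Min ?F" x] l x \<open>x \<in> {1..n}\<close> by auto
    moreover have "i x \<le> i (Max ?F)" using monoN_le[OF assms(1), of x "Max ?F"] r x \<open>x \<in> {1..n}\<close> by auto
    ultimately show "x \<in> ?F" using l r by auto
  qed
qed

lemma card_fiber:
  assumes "monoN n i" "2 \<le> cnt n i k"
  shows "Min {j\<in>{1..n}. i j = k} + (cnt n i k - 1) = Max {j\<in>{1..n}. i j = k}"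
    "Min {j\<in>{1..n}. i j = k} < Max {j\<in>{1..n}. i j = k}"
proof -
  let ?F = "{j\<in>{1..n}. i j = k}"
  have ne: "?F \<noteq> {}" using assms(2) unfolding cnt_def by (metis (no_types, lifting) card.empty not_numeral_le_zero)
  have "cnt n i k = card {Min ?F..Max ?F}" using fiber_interval[OF assms(1) ne] unfolding cnt_def by simp
  also have "\<dots> = Max ?F + 1 - Min ?F" by simp
  finally have "cnt n i k = Max ?F + 1 - Min ?F" .
  with assms(2) show "Min ?F + (cnt n i k - 1) = Max ?F" "Min ?F < Max ?F" by auto
qed

lemma max_runs_fin: "finite X \<Longrightarrow> finite (max_runs X)"
proof -
  assume "finite X"
  have "max_runs X \<subseteq> X \<times> X" unfolding max_runs_def by auto
  then show ?thesis using \<open>finite X\<close> finite_subset by blast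
qed

lemma CL:
  assumes mono: "monoN n i"
  shows "RM (Jset n i) = image_mset (\<lambda>k. cnt n i k - 1) (mset_set {k. 2 \<le> cnt n i k})"
proof -
  define F where "F k = {j\<in>{1..n}. i j = k}" for k
  define g where "g k = (Min (F k), Max (F k) - 1)" for k
  let ?K = "{k. 2 \<le> cnt n i k}"
  let ?J = "Jset n i"
  have finF: "finite (F k)" for k unfolding F_def by simp
  have neF: "F k \<noteq> {}" if "k \<in> ?K" for k using that unfolding cnt_def F_def
    by (metis (no_types, lifting) card.empty not_numeral_le_zero mem_Collect_eq)
  have minF: "Min (F k) \<in> F k" and maxF: "Max (F k) \<in> F k" if "k \<in> ?K" for k
    using finF neF[OF that] by (rule Min_in, rule Max_in)+
  have intF: "F k = {Min (F k)..Max (F k)}" if "k \<in> ?K" for k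
    using fiber_interval[OF mono] neF[OF that] unfolding F_def by blast
  have lt: "Min (F k) < Max (F k)" "Min (F k) + (cnt n i k - 1) = Max (F k)" if "k \<in> ?K" for k
    using card_fiber[OF mono, of k] that unfolding F_def by auto
  have inj: "inj_on g ?K"
  proof
    fix k k' assume "k \<in> ?K" "k' \<in> ?K" "g k = g k'"
    then have "Min (F k) = Min (F k')" unfolding g_def by simp
    then show "k = k'" using minF[OF \<open>k \<in> ?K\<close>] minF[OF \<open>k' \<in> ?K\<close>] unfolding F_def by auto
  qed
  have img: "g ` ?K = max_runs ?J"
  proof
    show "g ` ?K \<subseteq> max_runs ?J"
    proof
      fix p assume "p \<in> g ` ?K"
      then obtain k where k: "k \<in> ?K" "p = g k" by auto
      define l where "l = Min (F k)"
      define r where "r = Max (F k)"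
      have Fk: "F k = {l..r}" using intF[OF k(1)] unfolding l_def r_def .
      have lr: "l < r" using lt[OF k(1)] unfolding l_def r_def by simp
      have Fk': "F k = {j\<in>{1..n}. i j = k}" unfolding F_def ..
      have sub: "{l..r - 1} \<subseteq> ?J"
      proof
        fix j assume j: "j \<in> {l..r - 1}"
        then have "j \<in> F k" "Suc j \<in> F k" using Fk lr by auto
        then show "j \<in> ?J" unfolding Jset_def F_def by auto
      qed
      have nl: "l - 1 \<notin> ?J"
      proof
        assume h: "l - 1 \<in> ?J"
        then have "l - 1 \<ge> 1" "Suc (l - 1) = l" unfolding Jset_def by auto
        have "l \<in> F k" using Fk lr by auto
        then have "i (l - 1) = k" "l - 1 \<le> n" using h \<open>Suc (l - 1) = l\<close>
          unfolding Jset_def F_def by auto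
        then have "l - 1 \<in> F k" using \<open>l - 1 \<ge> 1\<close> unfolding F_def by auto
        then show False using Fk \<open>l - 1 \<ge> 1\<close> by auto
      qed
      have nr: "r - 1 + 1 \<notin> ?J"
      proof
        assume h: "r - 1 + 1 \<in> ?J"
        have r1: "r - 1 + 1 = r" using lr by simp
        have "r \<in> F k" using Fk lr by auto
        then have "i (Suc r) = k" "Suc r \<le> n" using h r1 unfolding Jset_def F_def by auto
        then have "Suc r \<in> F k" unfolding F_def by auto
        then show False using Fk by auto
      qed
      show "p \<in> max_runs ?J" using k(2) sub nl nr lr unfolding g_def max_runs_def l_def[symmetric] r_def[symmetric]
        by auto
    qed
  next
    show "max_runs ?J \<subseteq> g ` ?K"
    proof
      fix p assume p: "p \<in> max_runs ?J"
      obtain a b where ab: "p = (a, b)" by (cases p)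
      have ab': "a \<le> b" "{a..b} \<subseteq> ?J" "a - 1 \<notin> ?J" "b + 1 \<notin> ?J" using p unfolding ab max_runs_def by auto
      have aJ: "a \<in> ?J" "b \<in> ?J" using ab' by auto
      then have a1: "1 \<le> a" "b < n" unfolding Jset_def by auto
      define k where "k = i a"
      have seg: "i (a + t) = k" if "t \<le> b + 1 - a" for t
        using that
      proof (induction t)
        case 0 then show ?case unfolding k_def by simp
      next
        case (Suc t)
        then have "a + t \<in> ?J" using ab' by auto
        then show ?case using Suc unfolding Jset_def by auto
      qed
      have segF: "{a..b+1} \<subseteq> F k"
      proof
        fix j assume "j \<in> {a..b+1}"
        then have "i (a + (j - a)) = k" using seg[of "j - a"] by auto
        then show "j \<in> F k" using \<open>j \<in> {a..b+1}\<close> a1 unfolding F_def by auto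
      qed
      have "card {a..b+1} \<le> card (F k)" using card_mono[OF finF segF] .
      then have kK: "k \<in> ?K" using ab'(1) unfolding cnt_def F_def by simp
      have Fk: "F k = {Min (F k)..Max (F k)}" using intF[OF kK] .
      have mina: "Min (F k) = a"
      proof (rule ccontr)
        assume "Min (F k) \<noteq> a"
        then have "Min (F k) < a" using Min_le[OF finF, of a] segF ab'(1) by force
        moreover have "a \<in> F k" using segF ab'(1) by auto
        then have "a \<le> Max (F k)" using Max_ge[OF finF] by blast
        ultimately have "a - 1 \<in> {Min (F k)..Max (F k)}" by auto
        then have "a - 1 \<in> F k" using Fk by blast
        moreover have "Min (F k) \<ge> 1" using minF[OF kK] unfolding F_def by auto
        ultimately have "a - 1 \<in> F k" "a - 1 \<ge> 1" using \<open>Min (F k) < a\<close> by auto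
        then have "a - 1 \<in> ?J" using a1 ab'(1) k_def unfolding F_def Jset_def by auto
        then show False using ab' by simp
      qed
      moreover have "Max (F k) = b + 1"
      proof (rule ccontr)
        assume "Max (F k) \<noteq> b + 1"
        moreover have "b + 1 \<in> F k" using segF ab'(1) by auto
        then have "b + 1 \<le> Max (F k)" using Max_ge[OF finF] by blast
        ultimately have "b + 1 < Max (F k)" by simp
        then have "b + 2 \<in> {Min (F k)..Max (F k)}" using mina ab'(1) by auto
        then have "b + 2 \<in> F k" "b + 1 \<in> F k" using Fk segF ab'(1) by auto
        then have "b + 1 \<in> ?J" unfolding F_def Jset_def by auto
        then show False using ab' by simp
      qed
      ultimately have "p = g k" unfolding g_def ab by simp
      then show "p \<in> g ` ?K" using kK by blast
    qed
  qed
  have "mset_set (max_runs ?J) = image_mset g (mset_set ?K)"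
    using image_mset_mset_set[OF inj] img by simp
  then have "RM ?J = image_mset ((\<lambda>(a, b). b - a + 1) \<circ> g) (mset_set ?K)"
    unfolding RM_def by (simp add: multiset.map_comp)
  also have "\<dots> = image_mset (\<lambda>k. cnt n i k - 1) (mset_set ?K)"
  proof (rule image_mset_cong)
    fix k assume "k \<in># mset_set ?K"
    then have kK: "k \<in> ?K"
      by (metis (mono_tags, lifting) elem_mset_set mset_set.infinite set_mset_empty empty_iff)
    show "((\<lambda>(a, b). b - a + 1) \<circ> g) k = cnt n i k - 1"
      using lt[OF kK] unfolding g_def by auto
  qed
  finally show ?thesis .
qed

lemma run_uniq:
  assumes "r \<in> max_runs X" "s \<in> max_runs X" "fst r \<le> x" "x \<le> snd r" "fst s \<le> x" "x \<le> snd s"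
  shows "r = s"
proof -
  obtain a b c d where ab: "r = (a, b)" "s = (c, d)" by (cases r, cases s)
  have h: "{a..b} \<subseteq> X" "a - 1 \<notin> X" "b + 1 \<notin> X" "{c..d} \<subseteq> X" "c - 1 \<notin> X" "d + 1 \<notin> X"
    using assms(1,2) unfolding ab max_runs_def by auto
  have x: "a \<le> x" "x \<le> b" "c \<le> x" "x \<le> d" using assms(3-6) ab by auto
  have "a = c"
  proof (rule ccontr)
    assume "a \<noteq> c"
    then consider "a < c" | "c < a" by linarith
    then show False
    proof cases
      case 1 then have "c - 1 \<in> {a..b}" using x by auto
      then show False using h by auto
    next
      case 2 then have "a - 1 \<in> {c..d}" using x by auto
      then show False using h by auto
    qed
  qed
  moreover have "b = d"
  proof (rule ccontr)
    assume "b \<noteq> d"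
    then consider "b < d" | "d < b" by linarith
    then show False
    proof cases
      case 1 then have "b + 1 \<in> {c..d}" using x by auto
      then show False using h by auto
    next
      case 2 then have "d + 1 \<in> {a..b}" using x by auto
      then show False using h by auto
    qed
  qed
  ultimately show ?thesis using ab by simp
qed

lemma run_exists:
  assumes "finite X" "0 \<notin> X" "x \<in> X"
  shows "\<exists>r\<in>max_runs X. fst r \<le> x \<and> x \<le> snd r"
proof -
  define a where "a = (LEAST a. {a..x} \<subseteq> X)"
  have xx: "{x..x} \<subseteq> X" using assms(3) by simp
  have ha: "{a..x} \<subseteq> X" unfolding a_def by (rule LeastI[of _ x]) (rule xx)
  have ax: "a \<le> x" unfolding a_def by (rule Least_le) (rule xx)
  have a1: "a - 1 \<notin> X"
  proof
    assume h: "a - 1 \<in> X"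
    have "a \<in> X" using ha ax by auto
    then have "a \<noteq> 0" using assms(2) by (metis gr0I)
    have "{a - 1..x} \<subseteq> X"
    proof
      fix y assume y: "y \<in> {a - 1..x}"
      show "y \<in> X"
      proof (cases "y = a - 1")
        case True then show ?thesis using h by simp
      next
        case False then have "y \<in> {a..x}" using y by auto
        then show ?thesis using ha by blast
      qed
    qed
    then have "a \<le> a - 1" unfolding a_def by (rule Least_le)
    then show False using \<open>a \<noteq> 0\<close> by simp
  qed
  define B where "B = {b. x \<le> b \<and> {x..b} \<subseteq> X}"
  have Bsub: "B \<subseteq> X" unfolding B_def by auto
  have finB: "finite B" using finite_subset[OF Bsub assms(1)] .
  have xB: "x \<in> B" unfolding B_def using assms(3) by auto
  define b where "b = Max B"
  have bB: "b \<in> B" unfolding b_def using finB xB Max_in by blast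
  have xb: "x \<le> b" unfolding b_def using finB xB by (rule Max_ge)
  have b1: "b + 1 \<notin> X"
  proof
    assume "b + 1 \<in> X"
    then have "b + 1 \<in> B" using bB unfolding B_def by (auto simp: le_Suc_eq)
    then have "b + 1 \<le> b" unfolding b_def using Max_ge[OF finB] by blast
    then show False by simp
  qed
  have "{a..b} \<subseteq> X"
  proof
    fix y assume y: "y \<in> {a..b}"
    show "y \<in> X"
    proof (cases "y \<le> x")
      case True then show ?thesis using ha y by auto
    next
      case False then show ?thesis using bB y unfolding B_def by auto
    qed
  qed
  then have "(a, b) \<in> max_runs X" using a1 b1 ax xb unfolding max_runs_def by auto
  then show ?thesis using ax xb by force
qed

lemma mset_bij:
  assumes "finite A" "finite B" "image_mset f (mset_set A) = image_mset g (mset_set B)"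
  shows "\<exists>\<psi>. bij_betw \<psi> A B \<and> (\<forall>a\<in>A. g (\<psi> a) = f a)"
  using assms
proof (induction A arbitrary: B rule: finite_induct)
  case empty
  then have "B = {}" by (metis image_mset_is_empty_iff mset_set_empty_iff mset_set.empty)
  then show ?case by (intro exI[of _ "\<lambda>_. undefined"]) (simp add: bij_betw_def)
next
  case (insert a A)
  have eqm: "add_mset (f a) (image_mset f (mset_set A)) = image_mset g (mset_set B)"
    using insert by simp
  have "f a \<in># add_mset (f a) (image_mset f (mset_set A))" by simp
  then have "f a \<in># image_mset g (mset_set B)" unfolding eqm .
  then obtain b where b: "b \<in> B" "g b = f a" using insert.prems(1) by auto
  have "mset_set B = add_mset b (mset_set (B - {b}))" using b(1) insert.prems(1) by (simp add: mset_set.remove)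
  then have "image_mset f (mset_set A) = image_mset g (mset_set (B - {b}))"
    using eqm b(2) by simp
  then obtain \<psi> where psi: "bij_betw \<psi> A (B - {b})" "\<forall>a\<in>A. g (\<psi> a) = f a"
    using insert.IH[of "B - {b}"] insert.prems(1) by (meson finite_Diff)
  define \<psi>' where "\<psi>' = \<psi>(a := b)"
  have "bij_betw \<psi>' (insert a A) B"
  proof -
    have eq: "\<And>x. x \<in> A \<Longrightarrow> \<psi>' x = \<psi> x" unfolding \<psi>'_def using insert.hyps(2) by auto
    have "bij_betw \<psi>' A (B - {b}) = bij_betw \<psi> A (B - {b})" by (rule bij_betw_cong) (rule eq)
    then have bA: "bij_betw \<psi>' A (B - {b})" using psi(1) by simp
    have pa: "\<psi>' a = b" unfolding \<psi>'_def by simp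
    have eq3: "bij_betw \<psi>' A (B - {b}) = bij_betw \<psi>' (A \<union> {a}) ((B - {b}) \<union> {\<psi>' a})"
      by (rule notIn_Un_bij_betw3) (use insert.hyps(2) pa in auto)
    have s1: "A \<union> {a} = insert a A" "(B - {b}) \<union> {\<psi>' a} = B" using pa b(1) by auto
    show ?thesis using bA eq3 unfolding s1 by simp
  qed
  moreover have "\<forall>x\<in>insert a A. g (\<psi>' x) = f x" using psi(2) b(2) insert.hyps(2) unfolding \<psi>'_def by auto
  ultimately show ?case by blast
qed

definition runof :: "nat set \<Rightarrow> nat \<Rightarrow> nat \<times> nat" where
  "runof X x = (THE r. r \<in> max_runs X \<and> fst r \<le> x \<and> x \<le> snd r)"

lemma runof_eq:
  assumes "r \<in> max_runs X" "fst r \<le> x" "x \<le> snd r"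
  shows "runof X x = r"
  unfolding runof_def
proof (rule the_equality)
  show "r \<in> max_runs X \<and> fst r \<le> x \<and> x \<le> snd r" using assms by simp
  fix s assume "s \<in> max_runs X \<and> fst s \<le> x \<and> x \<le> snd s"
  then show "s = r" using run_uniq[of s X r x] assms by simp
qed

lemma runof:
  assumes "finite X" "0 \<notin> X" "x \<in> X"
  shows "runof X x \<in> max_runs X" "fst (runof X x) \<le> x" "x \<le> snd (runof X x)"
proof -
  obtain r where r: "r \<in> max_runs X" "fst r \<le> x" "x \<le> snd r" using run_exists[OF assms] by (elim bexE conjE)
  have e: "runof X x = r" using r by (rule runof_eq)
  show "runof X x \<in> max_runs X" "fst (runof X x) \<le> x" "x \<le> snd (runof X x)" unfolding e by (rule r)+
qed

lemma mr_props:
  assumes "r \<in> max_runs X"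
  shows "fst r \<le> snd r" "{fst r..snd r} \<subseteq> X" "fst r - 1 \<notin> X" "snd r + 1 \<notin> X"
proof -
  obtain a b where r: "r = (a, b)" by (cases r)
  have "a \<le> b \<and> {a..b} \<subseteq> X \<and> a - 1 \<notin> X \<and> b + 1 \<notin> X" using assms unfolding r max_runs_def by simp
  then show "fst r \<le> snd r" "{fst r..snd r} \<subseteq> X" "fst r - 1 \<notin> X" "snd r + 1 \<notin> X" unfolding r by simp_all
qed

lemma runof_Suc:
  assumes "finite X" "0 \<notin> X" "x \<in> X" "Suc x \<in> X"
  shows "runof X (Suc x) = runof X x"
proof -
  let ?r = "runof X x"
  have r: "?r \<in> max_runs X" "fst ?r \<le> x" "x \<le> snd ?r" using runof[OF assms(1-3)] by auto
  have "snd ?r \<noteq> x" using mr_props(4)[OF r(1)] assms(4) by auto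
  then have "Suc x \<le> snd ?r" using r(3) by simp
  then show ?thesis using r(2) by (intro runof_eq[OF r(1)]) simp_all
qed

definition adj :: "(nat \<Rightarrow> nat) \<Rightarrow> nat set \<Rightarrow> bool" where
  "adj \<phi> X \<longleftrightarrow> (\<forall>x\<in>X. \<forall>y\<in>X. (y = Suc x) = (\<phi> y = Suc (\<phi> x)))"

lemma adj_bij_exists:
  assumes fX: "finite X" and fX': "finite X'" and z: "0 \<notin> X" and z': "0 \<notin> X'" and RM: "RM X = RM X'"
  shows "\<exists>\<phi>. bij_betw \<phi> X X' \<and> adj \<phi> X"
proof -
  define len where "len = (\<lambda>(a::nat, b::nat). b - a + 1)"
  obtain \<psi> where psi: "bij_betw \<psi> (max_runs X) (max_runs X')" "\<forall>r\<in>max_runs X. len (\<psi> r) = len r"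
    using mset_bij[OF max_runs_fin[OF fX] max_runs_fin[OF fX'], of len len] RM unfolding RM_def len_def
    by auto
  have psi_in: "\<psi> r \<in> max_runs X'" if "r \<in> max_runs X" for r using psi(1) that bij_betwE by blast
  have psi_len: "snd (\<psi> r) - fst (\<psi> r) = snd r - fst r" if "r \<in> max_runs X" for r
  proof -
    have "len (\<psi> r) = len r" using psi(2) that by blast
    then show ?thesis using mr_props(1)[OF that] mr_props(1)[OF psi_in[OF that]] unfolding len_def
      by (cases r, cases "\<psi> r") auto
  qed
  have psi_inj: "r = s" if "r \<in> max_runs X" "s \<in> max_runs X" "\<psi> r = \<psi> s" for r s
    using psi(1) that unfolding bij_betw_def inj_on_def by blast
  define \<phi> where "\<phi> x = fst (\<psi> (runof X x)) + (x - fst (runof X x))" for x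
  have P: "\<phi> x \<in> X' \<and> runof X' (\<phi> x) = \<psi> (runof X x)" if "x \<in> X" for x
  proof -
    let ?r = "runof X x"
    have r: "?r \<in> max_runs X" "fst ?r \<le> x" "x \<le> snd ?r" using runof[OF fX z that] by auto
    have r': "\<psi> ?r \<in> max_runs X'" using psi_in[OF r(1)] .
    have "fst (\<psi> ?r) \<le> \<phi> x" "\<phi> x \<le> snd (\<psi> ?r)"
      using psi_len[OF r(1)] r mr_props(1)[OF r'] unfolding \<phi>_def by auto
    then show ?thesis using mr_props(2)[OF r'] runof_eq[OF r'] by auto
  qed
  have adj1: "\<phi> (Suc x) = Suc (\<phi> x)" if "x \<in> X" "Suc x \<in> X" for x
  proof -
    have "runof X (Suc x) = runof X x" using runof_Suc[OF fX z that] .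
    then show ?thesis using runof(2)[OF fX z that(1)] unfolding \<phi>_def by simp
  qed
  have same: "runof X x = runof X y" if "x \<in> X" "y \<in> X" "runof X' (\<phi> x) = runof X' (\<phi> y)" for x y
  proof -
    have "\<psi> (runof X x) = \<psi> (runof X y)" using that(3) P[OF that(1)] P[OF that(2)] by simp
    then show ?thesis using psi_inj runof(1)[OF fX z that(1)] runof(1)[OF fX z that(2)] by blast
  qed
  have inj: "inj_on \<phi> X"
  proof
    fix x y assume h: "x \<in> X" "y \<in> X" "\<phi> x = \<phi> y"
    then have "runof X x = runof X y" using same[OF h(1,2)] by simp
    then show "x = y" using h runof(2)[OF fX z h(1)] runof(2)[OF fX z h(2)] unfolding \<phi>_def by simp
  qed
  have surj: "\<phi> ` X = X'"
  proof
    show "\<phi> ` X \<subseteq> X'" using P by blast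
    show "X' \<subseteq> \<phi> ` X"
    proof
      fix w assume w: "w \<in> X'"
      let ?r' = "runof X' w"
      have r': "?r' \<in> max_runs X'" "fst ?r' \<le> w" "w \<le> snd ?r'" using runof[OF fX' z' w] by auto
      have "?r' \<in> \<psi> ` max_runs X" using psi(1) r'(1) unfolding bij_betw_def by simp
      then obtain r where r: "r \<in> max_runs X" "\<psi> r = ?r'" by (elim imageE) simp
      define x where "x = fst r + (w - fst ?r')"
      have x: "fst r \<le> x" "x \<le> snd r" using psi_len[OF r(1)] r' r(2) mr_props(1)[OF r(1)] unfolding x_def by auto
      then have xX: "x \<in> X" using mr_props(2)[OF r(1)] by auto
      have "runof X x = r" using runof_eq[OF r(1) x] .
      then have "\<phi> x = w" unfolding \<phi>_def x_def using r(2) r'(2) by simp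
      then show "w \<in> \<phi> ` X" using xX by blast
    qed
  qed
  have "adj \<phi> X"
    unfolding adj_def
  proof (intro ballI iffI)
    fix x y assume "x \<in> X" "y \<in> X" "y = Suc x"
    then show "\<phi> y = Suc (\<phi> x)" using adj1 by blast
  next
    fix x y assume h: "x \<in> X" "y \<in> X" "\<phi> y = Suc (\<phi> x)"
    have "\<phi> x \<in> X'" "\<phi> y \<in> X'" using P h(1,2) by auto
    then have "\<phi> x \<in> X'" "Suc (\<phi> x) \<in> X'" using h(3) by auto
    then have "runof X' (Suc (\<phi> x)) = runof X' (\<phi> x)" using runof_Suc[OF fX' z'] by blast
    then have "runof X y = runof X x" using same[OF h(2,1)] h(3) by simp
    then show "y = Suc x" using h runof(2)[OF fX z h(1)] runof(2)[OF fX z h(2)] unfolding \<phi>_def by simp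
  qed
  then show ?thesis using inj surj unfolding bij_betw_def by blast
qed

lemma runs_map:
  assumes adj: "adj \<phi> X" and YX: "Y \<subseteq> X" and z: "0 \<notin> \<phi> ` X" and r: "(a, b) \<in> max_runs Y"
  shows "(\<phi> a, \<phi> b) \<in> max_runs (\<phi> ` Y)" "\<phi> b - \<phi> a = b - a"
proof -
  have ab: "a \<le> b" "{a..b} \<subseteq> Y" "a - 1 \<notin> Y" "b + 1 \<notin> Y" using mr_props[OF r] by auto
  have seg: "\<phi> (a + t) = \<phi> a + t" if "t \<le> b - a" for t
    using that
  proof (induction t)
    case 0 then show ?case by simp
  next
    case (Suc t)
    have i1: "a + t \<in> {a..b}" and i2: "Suc (a + t) \<in> {a..b}" using Suc.prems ab(1) by auto
    have "a + t \<in> X" using subsetD[OF YX subsetD[OF ab(2) i1]] .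
    moreover have "Suc (a + t) \<in> X" using subsetD[OF YX subsetD[OF ab(2) i2]] .
    ultimately have "\<phi> (Suc (a + t)) = Suc (\<phi> (a + t))" using adj unfolding adj_def by blast
    then show ?case using Suc by simp
  qed
  have pb: "\<phi> b = \<phi> a + (b - a)" using seg[of "b - a"] ab(1) by simp
  then show "\<phi> b - \<phi> a = b - a" by simp
  have sub: "{\<phi> a..\<phi> b} \<subseteq> \<phi> ` Y"
  proof
    fix w assume w: "w \<in> {\<phi> a..\<phi> b}"
    then have "w = \<phi> (a + (w - \<phi> a))" using seg[of "w - \<phi> a"] pb by auto
    moreover have "a + (w - \<phi> a) \<in> {a..b}" using w pb ab(1) by auto
    then have "a + (w - \<phi> a) \<in> Y" using ab(2) by blast
    ultimately show "w \<in> \<phi> ` Y" by blast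
  qed
  have aX: "a \<in> X" "b \<in> X" using ab YX by auto
  have n1: "\<phi> a - 1 \<notin> \<phi> ` Y"
  proof
    assume "\<phi> a - 1 \<in> \<phi> ` Y"
    then obtain x where x: "x \<in> Y" "\<phi> a - 1 = \<phi> x" by auto
    have "\<phi> a \<noteq> 0" using z aX by force
    then have "\<phi> a = Suc (\<phi> x)" using x by simp
    then have "a = Suc x" using adj x(1) aX YX unfolding adj_def by blast
    then show False using x(1) ab(3) by simp
  qed
  have n2: "\<phi> b + 1 \<notin> \<phi> ` Y"
  proof
    assume "\<phi> b + 1 \<in> \<phi> ` Y"
    then obtain x where x: "x \<in> Y" "\<phi> b + 1 = \<phi> x" by auto
    then have "x = Suc b" using adj x(1) aX YX unfolding adj_def by auto
    then show False using x(1) ab(4) by simp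
  qed
  show "(\<phi> a, \<phi> b) \<in> max_runs (\<phi> ` Y)" using sub n1 n2 pb unfolding max_runs_def by auto
qed

lemma adj_inv:
  assumes "bij_betw \<phi> X X'" "adj \<phi> X"
  shows "adj (the_inv_into X \<phi>) X'"
  unfolding adj_def
proof (intro ballI)
  fix x' y' assume h: "x' \<in> X'" "y' \<in> X'"
  have inj: "inj_on \<phi> X" and im: "\<phi> ` X = X'" using assms(1) unfolding bij_betw_def by auto
  obtain x y where xy: "x \<in> X" "y \<in> X" "x' = \<phi> x" "y' = \<phi> y" using h im by blast
  have "the_inv_into X \<phi> x' = x" "the_inv_into X \<phi> y' = y" using the_inv_into_f_f[OF inj] xy by auto
  then show "(y' = Suc x') = (the_inv_into X \<phi> y' = Suc (the_inv_into X \<phi> x'))"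
    using assms(2) xy unfolding adj_def by auto
qed

lemma RM_map:
  assumes bij: "bij_betw \<phi> X X'" and adj: "adj \<phi> X" and YX: "Y \<subseteq> X" and z: "0 \<notin> X" "0 \<notin> X'"
    and fX: "finite X"
  shows "RM (\<phi> ` Y) = RM Y"
proof -
  have inj: "inj_on \<phi> X" and im: "\<phi> ` X = X'" using bij unfolding bij_betw_def by auto
  define \<psi> where "\<psi> = the_inv_into X \<phi>"
  have bij': "bij_betw \<psi> X' X" unfolding \<psi>_def by (rule bij_betw_the_inv_into[OF bij])
  have adj': "adj \<psi> X'" unfolding \<psi>_def by (rule adj_inv[OF bij adj])
  have im': "\<psi> ` X' = X" using bij' unfolding bij_betw_def by auto
  have YX': "\<phi> ` Y \<subseteq> X'" using YX im by auto
  have hback: "\<psi> ` (\<phi> ` Y) = Y"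
  proof -
    have "\<psi> (\<phi> y) = y" if "y \<in> Y" for y using the_inv_into_f_f[OF inj] that YX unfolding \<psi>_def by auto
    then show ?thesis by (force simp: image_comp)
  qed
  define \<Phi> where "\<Phi> = (\<lambda>(a::nat, b::nat). (\<phi> a, \<phi> b))"
  have img: "\<Phi> ` max_runs Y = max_runs (\<phi> ` Y)"
  proof
    show "\<Phi> ` max_runs Y \<subseteq> max_runs (\<phi> ` Y)"
    proof
      fix p assume "p \<in> \<Phi> ` max_runs Y"
      then obtain a b where "(a, b) \<in> max_runs Y" "p = (\<phi> a, \<phi> b)" unfolding \<Phi>_def by auto
      then show "p \<in> max_runs (\<phi> ` Y)" using runs_map(1)[OF adj YX] z im by auto
    qed
    show "max_runs (\<phi> ` Y) \<subseteq> \<Phi> ` max_runs Y"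
    proof
      fix p assume p: "p \<in> max_runs (\<phi> ` Y)"
      obtain a' b' where ab: "p = (a', b')" by (cases p)
      have "(\<psi> a', \<psi> b') \<in> max_runs (\<psi> ` \<phi> ` Y)"
        using runs_map(1)[OF adj' YX', of a' b'] p ab z im' by auto
      then have m: "(\<psi> a', \<psi> b') \<in> max_runs Y" using hback by simp
      have "a' \<in> \<phi> ` Y" "b' \<in> \<phi> ` Y" using mr_props(1,2)[OF p] ab by auto
      then have "\<phi> (\<psi> a') = a'" "\<phi> (\<psi> b') = b'" using f_the_inv_into_f[OF inj] YX unfolding \<psi>_def by auto
      then have "p = \<Phi> (\<psi> a', \<psi> b')" unfolding \<Phi>_def ab by simp
      then show "p \<in> \<Phi> ` max_runs Y" using m by blast
    qed
  qed
  have injP: "inj_on \<Phi> (max_runs Y)"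
  proof
    fix p q assume pq: "p \<in> max_runs Y" "q \<in> max_runs Y" "\<Phi> p = \<Phi> q"
    obtain a b c d where ab: "p = (a, b)" "q = (c, d)" by (cases p, cases q)
    have "a \<in> Y" "b \<in> Y" "c \<in> Y" "d \<in> Y" using mr_props(1,2)[OF pq(1)] mr_props(1,2)[OF pq(2)] ab by auto
    then show "p = q" using pq(3) inj YX unfolding ab \<Phi>_def inj_on_def by auto
  qed
  have "mset_set (max_runs (\<phi> ` Y)) = image_mset \<Phi> (mset_set (max_runs Y))"
    using image_mset_mset_set[OF injP] img by simp
  then have "RM (\<phi> ` Y) = image_mset ((\<lambda>(a, b). b - a + 1) \<circ> \<Phi>) (mset_set (max_runs Y))"
    unfolding RM_def by (simp add: multiset.map_comp)
  also have "\<dots> = RM Y" unfolding RM_def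
  proof (rule image_mset_cong)
    fix p assume "p \<in># mset_set (max_runs Y)"
    then have p: "p \<in> max_runs Y" by (metis elem_mset_set empty_iff mset_set.infinite set_mset_empty)
    obtain a b where ab: "p = (a, b)" by (cases p)
    have "\<phi> b - \<phi> a = b - a" using runs_map(2)[OF adj YX _ p[unfolded ab]] z im by auto
    then show "((\<lambda>(a, b). b - a + 1) \<circ> \<Phi>) p = (\<lambda>(a, b). b - a + 1) p" unfolding ab \<Phi>_def by simp
  qed
  finally show ?thesis .
qed

lemma mob_invariant:
  fixes f :: "nat set \<Rightarrow> int"
  assumes f: "\<And>Y Y'. Y \<subseteq> {1..m} \<Longrightarrow> Y' \<subseteq> {1..m} \<Longrightarrow> RM Y = RM Y' \<Longrightarrow> f Y = f Y'"
    and X: "X \<subseteq> {1..m}" "X' \<subseteq> {1..m}" "RM X = RM X'"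
  shows "(\<Sum>Y\<in>Pow X. (-1) ^ card Y * f Y) = (\<Sum>Y\<in>Pow X'. (-1) ^ card Y * f Y)"
proof -
  have fin: "finite X" "finite X'" using X finite_subset by auto
  have z: "0 \<notin> X" "0 \<notin> X'" using X by auto
  obtain \<phi> where phi: "bij_betw \<phi> X X'" "adj \<phi> X" using adj_bij_exists[OF fin z X(3)] by blast
  have inj: "inj_on \<phi> X" using phi(1) unfolding bij_betw_def by auto
  have "(\<Sum>Y\<in>Pow X'. (-1) ^ card Y * f Y) = (\<Sum>Y\<in>Pow X. (-1) ^ card (\<phi> ` Y) * f (\<phi> ` Y))"
    using sum.reindex_bij_betw[OF bij_betw_Pow[OF phi(1)], of "\<lambda>Y. (-1) ^ card Y * f Y"] by simp
  also have "\<dots> = (\<Sum>Y\<in>Pow X. (-1) ^ card Y * f Y)"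
  proof (rule sum.cong)
    fix Y assume "Y \<in> Pow X"
    then have Y: "Y \<subseteq> X" by simp
    have "card (\<phi> ` Y) = card Y" using card_image[OF inj_on_subset[OF inj Y]] .
    moreover have "RM (\<phi> ` Y) = RM Y" using RM_map[OF phi(1,2) Y z fin(1)] .
    moreover have "\<phi> ` Y \<subseteq> {1..m}" using Y X(2) phi(1) unfolding bij_betw_def by auto
    moreover have "Y \<subseteq> {1..m}" using Y X(1) by auto
    ultimately show "(-1) ^ card (\<phi> ` Y) * f (\<phi> ` Y) = (-1) ^ card Y * f Y" using f by metis
  qed simp
  finally show ?thesis by simp
qed

lemma incl_excl:
  fixes S :: "'w set" and P :: "'w \<Rightarrow> nat \<Rightarrow> bool"
  assumes fS: "finite S" and fI: "finite I"
  shows "int (card {w\<in>S. \<forall>i\<in>I. P w i}) =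
         (\<Sum>Y\<in>Pow I. (-1) ^ card Y * int (card {w\<in>S. \<forall>i\<in>Y. \<not> P w i}))"
proof -
  have ind: "int (card {w\<in>S. Q w}) = (\<Sum>w\<in>S. if Q w then 1 else 0)" for Q
    using fS by (simp add: sum.inter_filter[symmetric])
  have prodf: "(if \<forall>i\<in>I. P w i then 1 else 0 :: int) =
      (\<Sum>Y\<in>Pow I. (-1) ^ card Y * (if \<forall>i\<in>Y. \<not> P w i then 1 else 0))" for w
  proof -
    have "(if \<forall>i\<in>I. P w i then 1 else 0 :: int) = (\<Prod>i\<in>I. (if P w i then 1 else 0))"
      using fI by (induction I rule: finite_induct) auto
    also have "\<dots> = (\<Prod>i\<in>I. (- (if \<not> P w i then 1 else 0)) + 1)"
      by (rule prod.cong) auto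
    also have "\<dots> = (\<Sum>Y\<in>Pow I. (\<Prod>i\<in>Y. - (if \<not> P w i then 1 else 0)) * (\<Prod>i\<in>I - Y. 1))"
      by (rule prod_add[OF fI])
    also have "\<dots> = (\<Sum>Y\<in>Pow I. (-1) ^ card Y * (if \<forall>i\<in>Y. \<not> P w i then 1 else 0))"
    proof (rule sum.cong)
      fix Y assume "Y \<in> Pow I"
      then have fY: "finite Y" using fI finite_subset by auto
      have "(\<Prod>i\<in>Y. - (if \<not> P w i then 1 else 0 :: int)) = (-1) ^ card Y * (\<Prod>i\<in>Y. (if \<not> P w i then 1 else 0))"
        using fY by (induction Y rule: finite_induct) auto
      also have "(\<Prod>i\<in>Y. (if \<not> P w i then 1 else 0 :: int)) = (if \<forall>i\<in>Y. \<not> P w i then 1 else 0)"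
        using fY by (induction Y rule: finite_induct) auto
      finally show "(\<Prod>i\<in>Y. - (if \<not> P w i then 1 else 0)) * (\<Prod>i\<in>I - Y. 1) =
          (-1) ^ card Y * (if \<forall>i\<in>Y. \<not> P w i then 1 else 0 :: int)" by simp
    qed simp
    finally show ?thesis .
  qed
  have "int (card {w\<in>S. \<forall>i\<in>I. P w i}) = (\<Sum>w\<in>S. \<Sum>Y\<in>Pow I. (-1) ^ card Y * (if \<forall>i\<in>Y. \<not> P w i then 1 else 0))"
    unfolding ind prodf ..
  also have "\<dots> = (\<Sum>Y\<in>Pow I. \<Sum>w\<in>S. (-1) ^ card Y * (if \<forall>i\<in>Y. \<not> P w i then 1 else 0))"
    by (rule sum.swap)
  also have "\<dots> = (\<Sum>Y\<in>Pow I. (-1) ^ card Y * int (card {w\<in>S. \<forall>i\<in>Y. \<not> P w i}))"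
    unfolding ind by (simp add: sum_distrib_left)
  finally show ?thesis .
qed

lemma fiber_sum:
  assumes "finite B" "i ` {1..n} \<subseteq> B"
  shows "(\<Sum>k\<in>B. card {j\<in>{1..n}. i j = k}) = n"
proof -
  have "card (\<Union>k\<in>B. {j\<in>{1..n}. i j = k}) = (\<Sum>k\<in>B. card {j\<in>{1..n}. i j = k})"
    by (rule card_UN_disjoint) (use assms in auto)
  moreover have "(\<Union>k\<in>B. {j\<in>{1..n}. i j = k}) = {1..n}" using assms(2) by auto
  ultimately show ?thesis by simp
qed

definition realizable :: "nat \<Rightarrow> (nat \<Rightarrow> nat) \<Rightarrow> bool" where
  "realizable n \<beta> \<longleftrightarrow> (\<exists>i. monoN n i \<and> cnt n i = \<beta>)"

lemma realizable_imp:
  assumes "realizable n \<beta>"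
  shows "finite {k. \<beta> k \<noteq> 0} \<and> sum \<beta> {k. \<beta> k \<noteq> 0} = n"
proof -
  obtain i where i: "monoN n i" "cnt n i = \<beta>" using assms unfolding realizable_def by blast
  have sub: "{k. \<beta> k \<noteq> 0} \<subseteq> i ` {1..n}"
  proof
    fix k assume "k \<in> {k. \<beta> k \<noteq> 0}"
    then have "card {j\<in>{1..n}. i j = k} \<noteq> 0" using i(2) unfolding cnt_def by (metis mem_Collect_eq)
    then have "{j\<in>{1..n}. i j = k} \<noteq> {}" by (metis card.empty)
    then show "k \<in> i ` {1..n}" by blast
  qed
  have fin: "finite {k. \<beta> k \<noteq> 0}" using finite_subset[OF sub] by simp
  have "sum \<beta> {k. \<beta> k \<noteq> 0} = sum \<beta> (i ` {1..n})"
    by (rule sum.mono_neutral_left) (use sub in auto)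
  also have "\<dots> = n" unfolding i(2)[symmetric] cnt_def by (rule fiber_sum) auto
  finally show ?thesis using fin by simp
qed

lemma realizable_intro:
  assumes fin: "finite {k. \<beta> k \<noteq> 0}" and sm: "sum \<beta> {k. \<beta> k \<noteq> 0} = n"
  shows "realizable n \<beta>"
proof -
  have fin': "finite {k. 0 < \<beta> k}" using fin by simp
  define A where "A = Abs_multiset \<beta>"
  have cA: "count A = \<beta>" unfolding A_def using count_Abs_multiset[OF fin'] .
  define xs where "xs = sorted_list_of_multiset A"
  have mx: "mset xs = A" unfolding xs_def by simp
  have sx: "sorted xs" unfolding xs_def by simp
  have setA: "set_mset A = {k. \<beta> k \<noteq> 0}" using cA by (auto simp: set_mset_def)
  have lx: "length xs = n"
  proof -
    have "length xs = size A" using mx by (metis size_mset)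
    also have "\<dots> = sum (count A) (set_mset A)" by (rule size_multiset_overloaded_eq)
    also have "\<dots> = n" using sm cA setA by simp
    finally show ?thesis .
  qed
  define i where "i j = xs ! (j - 1)" for j
  have "monoN n i" unfolding monoN_def i_def
  proof
    fix j assume "j \<in> {1..<n}"
    then show "xs ! (j - 1) \<le> xs ! (Suc j - 1)" using sx lx by (auto intro: sorted_nth_mono)
  qed
  moreover have "cnt n i = \<beta>"
  proof
    fix k
    have "cnt n i k = card {j\<in>{1..n}. xs ! (j - 1) = k}" unfolding cnt_def i_def ..
    also have "\<dots> = card {j. j < length xs \<and> xs ! j = k}"
    proof (rule bij_betw_same_card[of "\<lambda>j. j - 1"])
      show "bij_betw (\<lambda>j. j - 1) {j\<in>{1..n}. xs ! (j - 1) = k} {j. j < length xs \<and> xs ! j = k}"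
        unfolding bij_betw_def
      proof
        show "inj_on (\<lambda>j. j - 1) {j\<in>{1..n}. xs ! (j - 1) = k}" by (rule inj_onI) auto
        show "(\<lambda>j. j - 1) ` {j\<in>{1..n}. xs ! (j - 1) = k} = {j. j < length xs \<and> xs ! j = k}"
        proof
          show "(\<lambda>j. j - 1) ` {j\<in>{1..n}. xs ! (j - 1) = k} \<subseteq> {j. j < length xs \<and> xs ! j = k}"
            using lx by auto
          show "{j. j < length xs \<and> xs ! j = k} \<subseteq> (\<lambda>j. j - 1) ` {j\<in>{1..n}. xs ! (j - 1) = k}"
          proof
            fix j assume "j \<in> {j. j < length xs \<and> xs ! j = k}"
            then have "Suc j \<in> {j\<in>{1..n}. xs ! (j - 1) = k}" using lx by auto
            then show "j \<in> (\<lambda>j. j - 1) ` {j\<in>{1..n}. xs ! (j - 1) = k}" by force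
          qed
        qed
      qed
    qed
    also have "\<dots> = length (filter ((=) k) xs)" by (simp add: length_filter_conv_card eq_commute)
    also have "\<dots> = count (mset xs) k" by (induction xs) auto
    also have "\<dots> = \<beta> k" using mx cA by simp
    finally show "cnt n i k = \<beta> k" .
  qed
  ultimately show ?thesis unfolding realizable_def by blast
qed

lemma realizable_comp:
  assumes "realizable n \<beta>" "bij \<tau>"
  shows "realizable n (\<beta> \<circ> \<tau>)"
proof -
  let ?A = "{k. \<beta> k \<noteq> 0}"
  have r: "finite ?A" "sum \<beta> ?A = n" using realizable_imp[OF assms(1)] by auto
  have inj: "inj \<tau>" and surj: "surj \<tau>" using assms(2) bij_is_inj bij_is_surj by auto
  have e: "{k. (\<beta> \<circ> \<tau>) k \<noteq> 0} = \<tau> -` ?A" by auto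
  have fin: "finite (\<tau> -` ?A)" using finite_vimageI[OF r(1) inj] .
  have im: "\<tau> ` (\<tau> -` ?A) = ?A" using surj by (rule surj_image_vimage_eq)
  have "sum (\<beta> \<circ> \<tau>) (\<tau> -` ?A) = sum \<beta> (\<tau> ` (\<tau> -` ?A))"
    using sum.reindex[of \<tau> "\<tau> -` ?A" \<beta>] inj_on_subset[OF inj] by simp
  also have "\<dots> = n" using im r(2) by simp
  finally show ?thesis using fin e by (intro realizable_intro) simp_all
qed

lemma Q_coeff_real:
  assumes "monoN n i" and True: "finite S"
  shows "Q_coeff n S (cnt n i) = card {w\<in>S. \<forall>j\<in>Jset n i. j \<notin> Des n w}"
proof -
  have "Q_coeff n S (cnt n i) = (\<Sum>w\<in>S. if Des n w \<inter> Jset n i = {} then 1 else 0)"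
    unfolding Q_coeff_def
  proof (rule sum.cong)
    fix w assume "w \<in> S"
    have "Des n w \<subseteq> {1..<n}" unfolding Des_def by auto
    then show "F_coeff n (Des n w) (cnt n i) = (if Des n w \<inter> Jset n i = {} then 1 else 0)"
      using F_coeff_mono[OF assms(1)] by blast
  qed simp
  also have "\<dots> = card {w\<in>S. Des n w \<inter> Jset n i = {}}"
    using True by (simp add: sum.If_cases Int_def)
  also have "{w\<in>S. Des n w \<inter> Jset n i = {}} = {w\<in>S. \<forall>j\<in>Jset n i. j \<notin> Des n w}" by auto
  finally show ?thesis .
qed

lemma Q_coeff_unreal:
  assumes "\<not> realizable n \<beta>"
  shows "Q_coeff n S \<beta> = 0"
  unfolding Q_coeff_def
proof (rule sum.neutral, rule ballI)
  fix w assume "w \<in> S"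
  have "{i \<in> {1..n} \<rightarrow>\<^sub>E (UNIV :: nat set).
      (\<forall>j\<in>{1..<n}. i j \<le> i (Suc j)) \<and>
      (\<forall>j\<in>Des n w. i j < i (Suc j)) \<and>
      (\<forall>k. \<beta> k = card {j \<in> {1..n}. i j = k})} = {}"
  proof (rule ccontr)
    assume "\<not> ?thesis"
    then obtain i where "\<forall>j\<in>{1..<n}. i j \<le> i (Suc j)" "\<forall>k. \<beta> k = card {j \<in> {1..n}. i j = k}"
      by blast
    then have "monoN n i" "cnt n i = \<beta>" unfolding monoN_def cnt_def by auto
    then show False using assms unfolding realizable_def by blast
  qed
  then show "F_coeff n (Des n w) \<beta> = 0" unfolding F_coeff_def by (metis card.empty)
qed

lemma RM_comp:
  assumes "bij \<sigma>"
  shows "image_mset (\<lambda>k. \<beta> (\<sigma> k) - 1) (mset_set {k. 2 \<le> \<beta> (\<sigma> k)}) =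
         image_mset (\<lambda>k. \<beta> k - 1) (mset_set {k. 2 \<le> \<beta> k})"
proof -
  let ?K = "{k. 2 \<le> \<beta> k}"
  have inj: "inj \<sigma>" and surj: "surj \<sigma>" using assms bij_is_inj bij_is_surj by auto
  have e: "{k. 2 \<le> \<beta> (\<sigma> k)} = \<sigma> -` ?K" by auto
  have "image_mset \<sigma> (mset_set (\<sigma> -` ?K)) = mset_set (\<sigma> ` (\<sigma> -` ?K))"
    by (rule image_mset_mset_set) (use inj inj_on_subset in blast)
  also have "\<sigma> ` (\<sigma> -` ?K) = ?K" using surj by (rule surj_image_vimage_eq)
  finally have "mset_set ?K = image_mset \<sigma> (mset_set (\<sigma> -` ?K))" by simp
  then show ?thesis unfolding e by (simp add: multiset.map_comp comp_def)
qed

definition sJ :: "nat set \<Rightarrow> nat \<Rightarrow> nat" where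
  "sJ J j = card ({1..<j} - J)"

lemma sJ_Suc:
  assumes "1 \<le> j"
  shows "sJ J (Suc j) = sJ J j + (if j \<in> J then 0 else 1)"
proof (cases "j \<in> J")
  case True
  then have "{1..<Suc j} - J = {1..<j} - J" by (auto simp: less_Suc_eq)
  then show ?thesis using True unfolding sJ_def by simp
next
  case False
  then have "{1..<Suc j} - J = insert j ({1..<j} - J)" using assms by auto
  then show ?thesis using False unfolding sJ_def by simp
qed

lemma sJ_mono: "monoN n (sJ J)"
  unfolding monoN_def using sJ_Suc by simp

lemma sJ_Jset:
  assumes "J \<subseteq> {1..<n}"
  shows "Jset n (sJ J) = J"
  unfolding Jset_def using sJ_Suc assms by (auto split: if_splits)

lemma sJ_lt:
  assumes "j \<in> {1..n}"
  shows "sJ J j < n"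
proof -
  have "sJ J j \<le> card {1..<j}" unfolding sJ_def by (rule card_mono) auto
  moreover have "j \<le> n" "1 \<le> j" using assms by auto
  ultimately show ?thesis by simp
qed

lemma ms_decomp:
  fixes A :: "nat multiset"
  shows "A = filter_mset (\<lambda>v. 2 \<le> v) A + replicate_mset (count A 0) 0 + replicate_mset (count A 1) 1"
proof (rule multiset_eqI)
  fix v show "count A v = count (filter_mset (\<lambda>v. 2 \<le> v) A + replicate_mset (count A 0) 0 + replicate_mset (count A 1) 1) v"
    by (cases "v = 0"; cases "v = 1") auto
qed

lemma ms_eq:
  fixes A B :: "nat multiset"
  assumes "size A = size B" "sum_mset A = sum_mset B" "filter_mset (\<lambda>v. 2 \<le> v) A = filter_mset (\<lambda>v. 2 \<le> v) B"
  shows "A = B"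
proof -
  let ?F = "filter_mset (\<lambda>v. 2 \<le> v) A"
  have dA: "A = ?F + replicate_mset (count A 0) 0 + replicate_mset (count A 1) 1" by (rule ms_decomp)
  have dB: "B = ?F + replicate_mset (count B 0) 0 + replicate_mset (count B 1) 1"
    using ms_decomp[of B] assms(3) by simp
  have "sum_mset A = sum_mset ?F + count A 1" by (subst dA) simp
  moreover have "sum_mset B = sum_mset ?F + count B 1" by (subst dB) simp
  ultimately have c1: "count A 1 = count B 1" using assms(2) by simp
  have "size A = size ?F + count A 0 + count A 1" by (subst dA) simp
  moreover have "size B = size ?F + count B 0 + count B 1" by (subst dB) simp
  ultimately have c0: "count A 0 = count B 0" using assms(1) c1 by simp
  show ?thesis using dA dB c0 c1 by metis
qed

lemma perm_exists:
  assumes m: "monoN n i" "monoN n i'" and lt: "\<And>j. j \<in> {1..n} \<Longrightarrow> i j < n" "\<And>j. j \<in> {1..n} \<Longrightarrow> i' j < n"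
    and RM: "RM (Jset n i) = RM (Jset n i')"
  shows "\<exists>\<sigma>. bij \<sigma> \<and> cnt n i' = cnt n i \<circ> \<sigma>"
proof -
  define \<alpha> where "\<alpha> = cnt n i"
  define \<alpha>' where "\<alpha>' = cnt n i'"
  have z: "\<alpha> k = 0" "\<alpha>' k = 0" if "n \<le> k" for k
  proof -
    have "{j\<in>{1..n}. i j = k} = {}" "{j\<in>{1..n}. i' j = k} = {}" using lt that by fastforce+
    then show "\<alpha> k = 0" "\<alpha>' k = 0" unfolding \<alpha>_def \<alpha>'_def cnt_def by (metis card.empty)+
  qed
  have CLa: "RM (Jset n i) = image_mset (\<lambda>k. \<alpha> k - 1) (mset_set {k. 2 \<le> \<alpha> k})"
    unfolding \<alpha>_def by (rule CL[OF m(1)])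
  have CLb: "RM (Jset n i') = image_mset (\<lambda>k. \<alpha>' k - 1) (mset_set {k. 2 \<le> \<alpha>' k})"
    unfolding \<alpha>'_def by (rule CL[OF m(2)])
  have suc: "image_mset \<beta> (mset_set {k. 2 \<le> \<beta> k}) = image_mset Suc (image_mset (\<lambda>k. \<beta> k - 1) (mset_set {k. 2 \<le> \<beta> k}))"
    for \<beta> :: "nat \<Rightarrow> nat"
  proof -
    have "image_mset \<beta> (mset_set {k. 2 \<le> \<beta> k}) = image_mset (\<lambda>k. Suc (\<beta> k - 1)) (mset_set {k. 2 \<le> \<beta> k})"
    proof (rule image_mset_cong)
      fix k assume "k \<in># mset_set {k. 2 \<le> \<beta> k}"
      then have "2 \<le> \<beta> k" by (metis elem_mset_set empty_iff mem_Collect_eq mset_set.infinite set_mset_empty)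
      then show "\<beta> k = Suc (\<beta> k - 1)" by simp
    qed
    then show ?thesis by (simp add: multiset.map_comp comp_def)
  qed
  have E1: "image_mset \<alpha> (mset_set {k. 2 \<le> \<alpha> k}) = image_mset \<alpha>' (mset_set {k. 2 \<le> \<alpha>' k})"
    unfolding suc using RM CLa CLb by simp
  define A where "A = image_mset \<alpha> (mset_set {..<n})"
  define A' where "A' = image_mset \<alpha>' (mset_set {..<n})"
  have filt: "filter_mset (\<lambda>v. 2 \<le> v) (image_mset \<beta> (mset_set {..<n})) = image_mset \<beta> (mset_set {k. 2 \<le> \<beta> k})"
    if z0: "\<And>k. n \<le> k \<Longrightarrow> \<beta> k = 0" for \<beta> :: "nat \<Rightarrow> nat"
  proof -
    have "k < n" if "2 \<le> \<beta> k" for k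
    proof (rule ccontr)
      assume "\<not> k < n"
      then have "\<beta> k = 0" using z0 by simp
      then show False using that by simp
    qed
    then have "{k\<in>{..<n}. 2 \<le> \<beta> k} = {k. 2 \<le> \<beta> k}" by auto
    then show ?thesis by (simp add: filter_mset_image_mset)
  qed
  have F: "filter_mset (\<lambda>v. 2 \<le> v) A = filter_mset (\<lambda>v. 2 \<le> v) A'"
    unfolding A_def A'_def using filt[of \<alpha>] filt[of \<alpha>'] z E1 by simp
  have sums: "sum \<alpha> {..<n} = n" "sum \<alpha>' {..<n} = n"
    unfolding \<alpha>_def \<alpha>'_def cnt_def
    by (rule fiber_sum, simp, use lt in force)+
  have "sum_mset A = sum_mset A'" unfolding A_def A'_def using sums by (simp add: sum_unfold_sum_mset[symmetric])
  moreover have "size A = size A'" unfolding A_def A'_def by simp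
  ultimately have AA: "A = A'" using F ms_eq by blast
  have "mset (map \<alpha>' [0..<n]) = mset (map \<alpha> [0..<n])" using AA unfolding A_def A'_def
    by (simp add: atLeast0LessThan)
  then obtain p where p: "p permutes {..<length (map \<alpha> [0..<n])}" "permute_list p (map \<alpha> [0..<n]) = map \<alpha>' [0..<n]"
    by (rule mset_eq_permutation)
  have pn: "p permutes {..<n}" using p(1) by simp
  have "\<alpha>' k = \<alpha> (p k)" for k
  proof (cases "k < n")
    case True
    have pk: "p k < n" using permutes_in_image[OF pn] True by simp
    have "\<alpha>' k = map \<alpha>' [0..<n] ! k" using True by simp
    also have "\<dots> = permute_list p (map \<alpha> [0..<n]) ! k" using p(2) by simp
    also have "\<dots> = map \<alpha> [0..<n] ! p k" using permute_list_nth[OF p(1)] True by simp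
    also have "\<dots> = \<alpha> (p k)" using pk by simp
    finally show ?thesis .
  next
    case False
    then have "p k = k" using permutes_not_in[OF pn] by simp
    then show ?thesis using z False by simp
  qed
  then have "cnt n i' = cnt n i \<circ> p" unfolding \<alpha>_def \<alpha>'_def by auto
  moreover have "bij p" using permutes_bij[OF pn] .
  ultimately show ?thesis by blast
qed

lemma RM_run_decomp: "run_decomp I = run_decomp J \<longleftrightarrow> RM I = RM J"
proof
  assume "run_decomp I = run_decomp J"
  then have "mset (rev (sorted_list_of_multiset (RM I))) = mset (rev (sorted_list_of_multiset (RM J)))"
    unfolding run_decomp_def RM_def by simp
  then show "RM I = RM J" by simp
next
  assume "RM I = RM J"
  then show "run_decomp I = run_decomp J" unfolding run_decomp_def RM_def by simp
qed

lemma H_int_eq: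
  assumes "I \<subseteq> {1..<n}"
  shows "H_int S (A_sets n S) I = {w\<in>S. \<forall>i\<in>I. i \<in> Des n w}"
proof (cases "I = {}")
  case True then show ?thesis unfolding H_int_def by simp
next
  case False
  then show ?thesis unfolding H_int_def A_sets_def Des_def using assms by auto
qed

definition hc :: "nat \<Rightarrow> (nat \<Rightarrow> nat) set \<Rightarrow> nat set \<Rightarrow> nat" where
  "hc n S I = card {w\<in>S. \<forall>i\<in>I. i \<in> Des n w}"

definition Mc :: "nat \<Rightarrow> (nat \<Rightarrow> nat) set \<Rightarrow> nat set \<Rightarrow> nat" where
  "Mc n S J = card {w\<in>S. \<forall>i\<in>J. i \<notin> Des n w}"

lemma sym_M:
  assumes sym: "symmetric_set n S" and fS: "finite S"
    and J: "J \<subseteq> {1..<n}" "J' \<subseteq> {1..<n}" "RM J = RM J'"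
  shows "Mc n S J = Mc n S J'"
proof -
  have RMe: "RM (Jset n (sJ J)) = RM (Jset n (sJ J'))" using J sJ_Jset by simp
  obtain \<sigma> where s: "bij \<sigma>" "cnt n (sJ J') = cnt n (sJ J) \<circ> \<sigma>"
    using perm_exists[OF sJ_mono sJ_mono sJ_lt sJ_lt RMe] by blast
  have "Mc n S J' = Q_coeff n S (cnt n (sJ J'))"
    unfolding Mc_def using Q_coeff_real[OF sJ_mono fS] sJ_Jset[OF J(2)] by simp
  also have "\<dots> = Q_coeff n S (cnt n (sJ J))" using sym s unfolding symmetric_set_def by simp
  also have "\<dots> = Mc n S J"
    unfolding Mc_def using Q_coeff_real[OF sJ_mono fS] sJ_Jset[OF J(1)] by simp
  finally show ?thesis by simp
qed

theorem proposition3p14: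
  fixes n :: nat and S :: "(nat \<Rightarrow> nat) set"
  assumes "S \<subseteq> {p. p permutes {1..n}}"
  shows "symmetric_set n S \<longleftrightarrow> harmonic S (A_sets n S) (n - 1)"
proof -
  have fS: "finite S" using finite_subset[OF assms] finite_permutations[of "{1..n}"] by simp
  have iv: "{1..n - 1} = {1..<n}" by auto
  have hc_ie: "int (hc n S I) = (\<Sum>Y\<in>Pow I. (-1) ^ card Y * int (Mc n S Y))" if "finite I" for I
    unfolding hc_def Mc_def using incl_excl[OF fS that, of "\<lambda>w i. i \<in> Des n w"] by simp
  have Mc_ie: "int (Mc n S I) = (\<Sum>Y\<in>Pow I. (-1) ^ card Y * int (hc n S Y))" if "finite I" for I
    unfolding hc_def Mc_def using incl_excl[OF fS that, of "\<lambda>w i. i \<notin> Des n w"] by simp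
  have cardH: "card (H_int S (A_sets n S) I) = hc n S I" if "I \<subseteq> {1..<n}" for I
    unfolding hc_def using H_int_eq[OF that] by simp
  show ?thesis
  proof
    assume sym: "symmetric_set n S"
    show "harmonic S (A_sets n S) (n - 1)"
      unfolding harmonic_def
    proof (intro allI impI)
      fix I J assume h: "I \<subseteq> {1..n - 1}" "J \<subseteq> {1..n - 1}" "run_decomp I = run_decomp J"
      have RMe: "RM I = RM J" using h(3) RM_run_decomp by blast
      have fin: "finite I" "finite J" using h finite_subset by auto
      have f: "int (Mc n S Y) = int (Mc n S Y')" if "Y \<subseteq> {1..n - 1}" "Y' \<subseteq> {1..n - 1}" "RM Y = RM Y'" for Y Y'
      proof -
        have "Mc n S Y = Mc n S Y'" by (rule sym_M[OF sym fS]) (use that iv in auto)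
        then show ?thesis by simp
      qed
      have "int (hc n S I) = int (hc n S J)"
        unfolding hc_ie[OF fin(1)] hc_ie[OF fin(2)]
        by (rule mob_invariant[where f = "\<lambda>Y. int (Mc n S Y)", OF f h(1,2) RMe])
      then show "card (H_int S (A_sets n S) I) = card (H_int S (A_sets n S) J)"
        using cardH h(1,2) iv by simp
    qed
  next
    assume harm: "harmonic S (A_sets n S) (n - 1)"
    have hf: "int (hc n S Y) = int (hc n S Y')" if "Y \<subseteq> {1..n - 1}" "Y' \<subseteq> {1..n - 1}" "RM Y = RM Y'" for Y Y'
    proof -
      have "card (H_int S (A_sets n S) Y) = card (H_int S (A_sets n S) Y')"
        using harm that(1,2) RM_run_decomp[of Y Y'] that(3) unfolding harmonic_def by blast
      then show ?thesis using cardH that iv by simp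
    qed
    have Mf: "Mc n S J = Mc n S J'" if "J \<subseteq> {1..<n}" "J' \<subseteq> {1..<n}" "RM J = RM J'" for J J'
    proof -
      have fin: "finite J" "finite J'" using that finite_subset by auto
      have "int (Mc n S J) = int (Mc n S J')"
        unfolding Mc_ie[OF fin(1)] Mc_ie[OF fin(2)]
        by (rule mob_invariant[where f = "\<lambda>Y. int (hc n S Y)", OF hf]) (use that iv in auto)
      then show ?thesis by simp
    qed
    show "symmetric_set n S"
      unfolding symmetric_set_def
    proof (intro allI impI)
      fix \<sigma> :: "nat \<Rightarrow> nat" and \<alpha> assume bs: "bij \<sigma>"
      show "Q_coeff n S (\<alpha> \<circ> \<sigma>) = Q_coeff n S \<alpha>"
      proof (cases "realizable n \<alpha>")
        case True
        obtain i where i: "monoN n i" "cnt n i = \<alpha>" using True unfolding realizable_def by blast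
        obtain i' where i': "monoN n i'" "cnt n i' = \<alpha> \<circ> \<sigma>"
          using realizable_comp[OF True bs] unfolding realizable_def by blast
        have "RM (Jset n i') = image_mset (\<lambda>k. \<alpha> (\<sigma> k) - 1) (mset_set {k. 2 \<le> \<alpha> (\<sigma> k)})"
          using CL[OF i'(1)] i'(2) by simp
        also have "\<dots> = image_mset (\<lambda>k. \<alpha> k - 1) (mset_set {k. 2 \<le> \<alpha> k})" by (rule RM_comp[OF bs])
        also have "\<dots> = RM (Jset n i)" using CL[OF i(1)] i(2) by simp
        finally have RMe: "RM (Jset n i') = RM (Jset n i)" .
        have sub: "Jset n i \<subseteq> {1..<n}" "Jset n i' \<subseteq> {1..<n}" unfolding Jset_def by auto
        have "Q_coeff n S (\<alpha> \<circ> \<sigma>) = Mc n S (Jset n i')"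
          unfolding Mc_def using Q_coeff_real[OF i'(1) fS] i'(2) by simp
        also have "\<dots> = Mc n S (Jset n i)" using Mf[OF sub(2,1) RMe] .
        also have "\<dots> = Q_coeff n S \<alpha>"
          unfolding Mc_def using Q_coeff_real[OF i(1) fS] i(2) by simp
        finally show ?thesis .
      next
        case False
        have "\<not> realizable n (\<alpha> \<circ> \<sigma>)"
        proof
          assume "realizable n (\<alpha> \<circ> \<sigma>)"
          then have "realizable n ((\<alpha> \<circ> \<sigma>) \<circ> inv \<sigma>)" using realizable_comp bij_imp_bij_inv[OF bs] by blast
          moreover have "(\<alpha> \<circ> \<sigma>) \<circ> inv \<sigma> = \<alpha>"
            using surj_iff[THEN iffD1, OF bij_is_surj[OF bs]] by (simp add: comp_assoc)
          ultimately show False using False by simp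
        qed
        then show ?thesis using Q_coeff_unreal False by simp
      qed
    qed
  qed
qed

end
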